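(* Let $\psi:\mathbb{R}^r\to\mathbb{R}$, let $S\subseteq\mathbb{R}^r$ be nonempty and closed, let $\bar z\in S$, and suppose $\psi$ is twice semidifferentiable at $\bar z$. (i) If $\bar z$ is a local minimizer of $\psi$ on $S$, then $\mathrm{d}\psi(\bar z)(w)\ge0$ for all $w\in T_S(\bar z)$, and for every $w\in T_S(\bar z)$ with $\mathrm{d}\psi(\bar z)(w)=0$, $$\mathrm{d}^2\psi(\bar z)(w)+\mathrm{d}^2\delta_S(\bar z;-\mathrm{d}\psi(\bar z))(w)\ge 0.$$ (ii) Suppose $\mathrm{d}\psi(\bar z)(w)\ge0$ for all $w\in T_S(\bar z)$ and that for every $w\in T_S(\bar z)\setminus\{0\}$ with $\mathrm{d}\psi(\bar z)(w)=0$, $$\mathrm{d}^2\psi(\bar z)(w)+\mathrm{d}^2\delta_S(\bar z;-\mathrm{d}\psi(\bar z))(w)>0.$$ Then there exist $\varepsilon>0$ and $\eta>0$ such that $\psi(z)\ge\psi(\bar z)+\varepsilon\|z-\bar z\|^2$ for all $z\in S\cap\mathbb{B}_\eta(\bar z)$; in particular $\bar z$ is a local minimizer of $\psi$ on $S$.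
   Context: $\mathbb{B}_\eta(z)$ is the closed Euclidean ball of radius $\eta$ centered at $z$. For $\psi:\mathbb{R}^r\to\mathbb{R}$ and $\bar z,w\in\mathbb{R}^r$: the subderivative is $\mathrm{d}\psi(\bar z)(w):=\liminf_{t\downarrow0,\,w'\to w}\frac{\psi(\bar z+tw')-\psi(\bar z)}{t}$; $\psi$ is semidifferentiable at $\bar z$ if for every $w$ the limit $\lim_{t\downarrow0,\,w'\to w}\frac{\psi(\bar z+tw')-\psi(\bar z)}{t}$ exists as a real number. The second subderivative is $\mathrm{d}^2\psi(\bar z)(w):=\liminf_{t\downarrow0,\,w'\to w}\frac{\psi(\bar z+tw')-\psi(\bar z)-t\,\mathrm{d}\psi(\bar z)(w')}{\frac12 t^2}$, and $\psi$ is twice semidifferentiable at $\bar z$ if it is semidifferentiable at $\bar z$ and for every $w$ this liminf is a limit and is a real number. $T_S(\bar z)$ is the tangent cone: $w\in T_S(\bar z)$ iff there are $t_k\downarrow0$, $w_k\to w$ with $\bar z+t_kw_k\in S$. For closed $S$, $\bar z\in S$ and $\varphi:\mathbb{R}^r\to\mathbb{R}$, define $\mathrm{d}^2\delta_S(\bar z;\varphi)(w):=\liminf_{t\downarrow0,\,w'\to w,\ \bar z+tw'\in S}\frac{-2\varphi(w')}{t}$ (equal to $+\infty$ if there are no such $t,w'$); thus $\mathrm{d}^2\delta_S(\bar z;-\mathrm{d}\psi(\bar z))(w)=\liminf_{t\downarrow0,\,w'\to w,\ \bar z+tw'\in S}\frac{2\,\mathrm{d}\psi(\bar z)(w')}{t}$.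 *)

theory Defs
  imports "HOL-Analysis.Analysis"
begin

definition tw_filter :: "'a::real_normed_vector \<Rightarrow> (real \<times> 'a) filter" where
  "tw_filter w = at_right 0 \<times>\<^sub>F nhds w"

definition subderiv :: "('a::real_normed_vector \<Rightarrow> real) \<Rightarrow> 'a \<Rightarrow> 'a \<Rightarrow> ereal" where
  "subderiv psi z w =
     Liminf (tw_filter w) (\<lambda>(t, w'). ereal ((psi (z + t *\<^sub>R w') - psi z) / t))"

definition semidifferentiable_at :: "('a::real_normed_vector \<Rightarrow> real) \<Rightarrow> 'a \<Rightarrow> bool" where
  "semidifferentiable_at psi z \<longleftrightarrow>
     (\<forall>w. \<exists>L::real. ((\<lambda>(t, w'). (psi (z + t *\<^sub>R w') - psi z) / t) \<longlongrightarrow> L) (tw_filter w))"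

definition second_quot :: "('a::real_normed_vector \<Rightarrow> real) \<Rightarrow> 'a \<Rightarrow> real \<times> 'a \<Rightarrow> ereal" where
  "second_quot psi z = (\<lambda>(t, w').
     (ereal (psi (z + t *\<^sub>R w') - psi z) - ereal t * subderiv psi z w') * ereal (2 / t\<^sup>2))"

definition second_subderiv :: "('a::real_normed_vector \<Rightarrow> real) \<Rightarrow> 'a \<Rightarrow> 'a \<Rightarrow> ereal" where
  "second_subderiv psi z w = Liminf (tw_filter w) (second_quot psi z)"

definition twice_semidifferentiable_at :: "('a::real_normed_vector \<Rightarrow> real) \<Rightarrow> 'a \<Rightarrow> bool" where
  "twice_semidifferentiable_at psi z \<longleftrightarrow> semidifferentiable_at psi z \<and>
     (\<forall>w. \<exists>L::real. (second_quot psi z \<longlongrightarrow> ereal L) (tw_filter w))"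

definition tangent_cone :: "'a::real_normed_vector set \<Rightarrow> 'a \<Rightarrow> 'a set" where
  "tangent_cone S z = {w. \<exists>t wk. (\<forall>k. t k > 0) \<and> t \<longlonglongrightarrow> 0 \<and> wk \<longlonglongrightarrow> w \<and>
                              (\<forall>k. z + t k *\<^sub>R wk k \<in> S)}"

text \<open>d^2 delta_S(z; phi)(w): liminf over t -> 0+, w' -> w with z + t w' in S of -2 phi(w')/t;
  the liminf over the trivial filter (no such points) is +infinity.\<close>
definition second_subderiv_indicator ::
  "'a::real_normed_vector set \<Rightarrow> 'a \<Rightarrow> ('a \<Rightarrow> real) \<Rightarrow> 'a \<Rightarrow> ereal" where
  "second_subderiv_indicator S z phi w =
     Liminf (inf (tw_filter w) (principal {(t, w'). z + t *\<^sub>R w' \<in> S}))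
            (\<lambda>(t, w'). ereal (- 2 * phi w' / t))"

definition local_minimizer_on :: "('a::real_normed_vector \<Rightarrow> real) \<Rightarrow> 'a set \<Rightarrow> 'a \<Rightarrow> bool" where
  "local_minimizer_on psi S z \<longleftrightarrow> z \<in> S \<and> (\<exists>\<eta>>0. \<forall>x\<in>S \<inter> cball z \<eta>. psi z \<le> psi x)"

end

theory Submission
  imports Defs
begin

lemma tw_ne: "tw_filter (w::'a::real_normed_vector) \<noteq> bot"
  unfolding tw_filter_def by (simp add: prod_filter_eq_bot)

lemma Liminf_filter_anti: "G \<le> F \<Longrightarrow> Liminf F f \<le> Liminf G f"
  unfolding Liminf_def by (auto intro!: SUP_subset_mono simp: le_filter_def)

lemma semi_lim:
  assumes "semidifferentiable_at psi z"
  shows "subderiv psi z w = ereal (real_of_ereal (subderiv psi z w))"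
    and "((\<lambda>(t, w'). (psi (z + t *\<^sub>R w') - psi z) / t) \<longlongrightarrow> real_of_ereal (subderiv psi z w)) (tw_filter w)"
proof -
  obtain L where L: "((\<lambda>(t, w'). (psi (z + t *\<^sub>R w') - psi z) / t) \<longlongrightarrow> L) (tw_filter w)"
    using assms unfolding semidifferentiable_at_def by blast
  have e: "(\<lambda>(t, w'). ereal ((psi (z + t *\<^sub>R w') - psi z) / t))
      = (\<lambda>x. ereal ((\<lambda>(t, w'). (psi (z + t *\<^sub>R w') - psi z) / t) x))" by auto
  have "subderiv psi z w = ereal L"
    unfolding subderiv_def e
    by (rule lim_imp_Liminf) (use tw_ne L in \<open>auto intro: tendsto_ereal\<close>)
  then show "subderiv psi z w = ereal (real_of_ereal (subderiv psi z w))"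
    and "((\<lambda>(t, w'). (psi (z + t *\<^sub>R w') - psi z) / t) \<longlongrightarrow> real_of_ereal (subderiv psi z w)) (tw_filter w)"
    using L by auto
qed

lemma sq_eq:
  assumes "\<And>v. subderiv psi z v = ereal (D v)"
  shows "second_quot psi z (t, w') = ereal (2 * (psi (z + t *\<^sub>R w') - psi z) / t\<^sup>2 - 2 * D w' / t)"
proof (cases "t = 0")
  case True then show ?thesis unfolding second_quot_def using assms by simp
next
  case False then show ?thesis unfolding second_quot_def using assms
    by (simp add: field_simps power2_eq_square)
qed

lemma seq_tw:
  assumes "\<And>k. t k > 0" "t \<longlonglongrightarrow> 0" "wk \<longlonglongrightarrow> w"
  shows "filterlim (\<lambda>k. (t k, wk k)) (tw_filter w) sequentially"
  unfolding tw_filter_def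
  by (intro filterlim_Pair tendsto_imp_filterlim_at_right assms) (simp add: assms)

lemma tw_fst: "(fst \<longlongrightarrow> 0) (tw_filter (w::'a::real_normed_vector))"
proof -
  have "filterlim fst (at_right (0::real)) (tw_filter w)"
    unfolding tw_filter_def by (rule filterlim_fst)
  then show ?thesis by (simp add: filterlim_at)
qed

lemma tw_snd: "(snd \<longlongrightarrow> w) (tw_filter (w::'a::real_normed_vector))"
  unfolding tw_filter_def by (rule filterlim_snd)

lemma tw_small:
  assumes "\<eta> > 0"
  shows "eventually (\<lambda>x. norm (fst x *\<^sub>R snd x) < \<eta>) (tw_filter (w::'a::real_normed_vector))"
proof -
  have "((\<lambda>x. fst x *\<^sub>R snd x) \<longlongrightarrow> 0 *\<^sub>R w) (tw_filter w)"
    by (intro tendsto_scaleR tw_fst tw_snd)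
  then have "((\<lambda>x. norm (fst x *\<^sub>R snd x)) \<longlongrightarrow> 0) (tw_filter w)"
    using tendsto_norm by fastforce
  then show ?thesis using assms by (simp add: order_tendstoD(2))
qed


lemma part1:
  fixes psi :: "'a::euclidean_space \<Rightarrow> real"
  assumes Dq: "\<And>v. subderiv psi zbar v = ereal (D v)"
    and Dl: "\<And>w. ((\<lambda>(t, w'). (psi (zbar + t *\<^sub>R w') - psi zbar) / t) \<longlongrightarrow> D w) (tw_filter w)"
    and L2: "\<And>w. (second_quot psi zbar \<longlongrightarrow> ereal (L2 w)) (tw_filter w)"
    and lm: "local_minimizer_on psi S zbar"
  shows "(\<forall>w\<in>tangent_cone S zbar. subderiv psi zbar w \<ge> 0) \<and>
            (\<forall>w\<in>tangent_cone S zbar. subderiv psi zbar w = 0 \<longrightarrow>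
               second_subderiv psi zbar w
               + second_subderiv_indicator S zbar (\<lambda>v. - real_of_ereal (subderiv psi zbar v)) w \<ge> 0)"
proof -
  obtain \<eta> where eta: "\<eta> > 0" and mn: "\<And>x. x \<in> S \<Longrightarrow> x \<in> cball zbar \<eta> \<Longrightarrow> psi zbar \<le> psi x"
    using lm unfolding local_minimizer_on_def by blast
  have c1: "subderiv psi zbar w \<ge> 0" if w: "w \<in> tangent_cone S zbar" for w
  proof -
    obtain t wk where t: "\<And>k. t k > 0" "t \<longlonglongrightarrow> 0" "wk \<longlonglongrightarrow> w" "\<And>k. zbar + t k *\<^sub>R wk k \<in> S"
      using w unfolding tangent_cone_def by blast
    have fl: "filterlim (\<lambda>k. (t k, wk k)) (tw_filter w) sequentially"
      using seq_tw t by blast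
    have q: "((\<lambda>k. (psi (zbar + t k *\<^sub>R wk k) - psi zbar) / t k) \<longlongrightarrow> D w) sequentially"
      using filterlim_compose[OF Dl fl] by simp
    have "((\<lambda>k. t k *\<^sub>R wk k) \<longlongrightarrow> 0 *\<^sub>R w) sequentially"
      by (intro tendsto_scaleR t)
    then have "((\<lambda>k. norm (t k *\<^sub>R wk k)) \<longlongrightarrow> 0) sequentially"
      using tendsto_norm by fastforce
    then have ev: "eventually (\<lambda>k. norm (t k *\<^sub>R wk k) < \<eta>) sequentially"
      using eta by (simp add: order_tendstoD(2))
    have "eventually (\<lambda>k. 0 \<le> (psi (zbar + t k *\<^sub>R wk k) - psi zbar) / t k) sequentially"
    proof (rule eventually_mono[OF ev])
      fix k assume "norm (t k *\<^sub>R wk k) < \<eta>"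
      then have "zbar + t k *\<^sub>R wk k \<in> cball zbar \<eta>" by (simp add: dist_norm)
      then have "psi zbar \<le> psi (zbar + t k *\<^sub>R wk k)" using mn t(4) by blast
      then show "0 \<le> (psi (zbar + t k *\<^sub>R wk k) - psi zbar) / t k" using t(1)[of k] by simp
    qed
    then have "0 \<le> D w" using tendsto_lowerbound[OF q] by simp
    then show ?thesis using Dq by simp
  qed
  have c2: "second_subderiv psi zbar w
               + second_subderiv_indicator S zbar (\<lambda>v. - real_of_ereal (subderiv psi zbar v)) w \<ge> 0" for w
  proof -
    define A where "A = {(t, w'). zbar + t *\<^sub>R w' \<in> S}"
    define F' where "F' = inf (tw_filter w) (principal A)"
    have ss: "second_subderiv psi zbar w = ereal (L2 w)"
      unfolding second_subderiv_def by (rule lim_imp_Liminf) (use tw_ne L2 in auto)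
    have ind: "second_subderiv_indicator S zbar (\<lambda>v. - real_of_ereal (subderiv psi zbar v)) w
        = Liminf F' (\<lambda>(t, w'). ereal (2 * D w' / t))"
      unfolding second_subderiv_indicator_def F'_def A_def using Dq by simp
    have ev: "eventually (\<lambda>x. - second_quot psi zbar x \<le> (\<lambda>(t, w'). ereal (2 * D w' / t)) x) F'"
    proof -
      have "eventually (\<lambda>x. x \<in> A \<longrightarrow> - second_quot psi zbar x \<le> (\<lambda>(t, w'). ereal (2 * D w' / t)) x) (tw_filter w)"
      proof (rule eventually_mono[OF tw_small[OF eta]])
        fix x :: "real \<times> 'a" assume h: "norm (fst x *\<^sub>R snd x) < \<eta>"
        obtain t w' where x: "x = (t, w')" by fastforce
        show "x \<in> A \<longrightarrow> - second_quot psi zbar x \<le> (\<lambda>(t, w'). ereal (2 * D w' / t)) x"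
        proof
          assume "x \<in> A"
          then have "zbar + t *\<^sub>R w' \<in> S" unfolding A_def x by simp
          moreover have "zbar + t *\<^sub>R w' \<in> cball zbar \<eta>" using h x by (simp add: dist_norm)
          ultimately have "psi zbar \<le> psi (zbar + t *\<^sub>R w')" using mn by blast
          then have "0 \<le> 2 * (psi (zbar + t *\<^sub>R w') - psi zbar) / t\<^sup>2" by simp
          then show "- second_quot psi zbar x \<le> (\<lambda>(t, w'). ereal (2 * D w' / t)) x"
            unfolding x sq_eq[of psi zbar D, OF Dq] by simp
        qed
      qed
      then show ?thesis unfolding F'_def eventually_inf_principal by simp
    qed
    have lb: "Liminf F' (\<lambda>x. - second_quot psi zbar x) \<ge> ereal (- L2 w)"
    proof (cases "F' = bot")
      case True then show ?thesis by simp
    next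
      case False
      have "((\<lambda>x. - second_quot psi zbar x) \<longlongrightarrow> - ereal (L2 w)) F'"
        unfolding F'_def by (intro tendsto_uminus_ereal tendsto_mono[OF inf_le1 L2])
      then have "Liminf F' (\<lambda>x. - second_quot psi zbar x) = - ereal (L2 w)"
        by (intro lim_imp_Liminf False)
      then show ?thesis by simp
    qed
    have "ereal (- L2 w) \<le> Liminf F' (\<lambda>(t, w'). ereal (2 * D w' / t))"
      using lb Liminf_mono[OF ev] by (rule order_trans)
    then have "ereal (L2 w) + ereal (- L2 w) \<le> ereal (L2 w) + Liminf F' (\<lambda>(t, w'). ereal (2 * D w' / t))"
      by (rule add_left_mono)
    then show ?thesis unfolding ss ind by (simp add: zero_ereal_def)
  qed
  show ?thesis using c1 c2 by auto
qed


lemma part2: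
  fixes psi :: "'a::euclidean_space \<Rightarrow> real"
  assumes Dq: "\<And>v. subderiv psi zbar v = ereal (D v)"
    and Dl: "\<And>w. ((\<lambda>(t, w'). (psi (zbar + t *\<^sub>R w') - psi zbar) / t) \<longlongrightarrow> D w) (tw_filter w)"
    and L2: "\<And>w. (second_quot psi zbar \<longlongrightarrow> ereal (L2 w)) (tw_filter w)"
    and H1: "\<forall>w\<in>tangent_cone S zbar. subderiv psi zbar w \<ge> 0"
    and H2: "\<forall>w\<in>tangent_cone S zbar - {0}. subderiv psi zbar w = 0 \<longrightarrow>
               second_subderiv psi zbar w
               + second_subderiv_indicator S zbar (\<lambda>v. - real_of_ereal (subderiv psi zbar v)) w > 0"
  shows "\<exists>\<epsilon>>0. \<exists>\<eta>>0. \<forall>z\<in>S \<inter> cball zbar \<eta>. psi z \<ge> psi zbar + \<epsilon> * (norm (z - zbar))\<^sup>2"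
proof (rule ccontr)
  assume na: "\<not> ?thesis"
  define e where "e k = inverse (real (Suc k))" for k
  have epos: "e k > 0" for k unfolding e_def by simp
  have ex: "\<exists>z. z \<in> S \<and> z \<in> cball zbar (e k) \<and> psi z < psi zbar + e k * (norm (z - zbar))\<^sup>2" for k
  proof -
    have "\<not> (\<forall>z\<in>S \<inter> cball zbar (e k). psi z \<ge> psi zbar + e k * (norm (z - zbar))\<^sup>2)"
    proof
      assume h: "\<forall>z\<in>S \<inter> cball zbar (e k). psi z \<ge> psi zbar + e k * (norm (z - zbar))\<^sup>2"
      have "\<exists>\<epsilon>>0. \<exists>\<eta>>0. \<forall>z\<in>S \<inter> cball zbar \<eta>. psi z \<ge> psi zbar + \<epsilon> * (norm (z - zbar))\<^sup>2"
        by (intro exI[of _ "e k"] conjI epos h)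
      then show False using na by simp
    qed
    then show ?thesis by (auto simp: not_le)
  qed
  define zs where "zs k = (SOME z. z \<in> S \<and> z \<in> cball zbar (e k) \<and> psi z < psi zbar + e k * (norm (z - zbar))\<^sup>2)" for k
  have zsP: "zs k \<in> S \<and> zs k \<in> cball zbar (e k) \<and> psi (zs k) < psi zbar + e k * (norm (zs k - zbar))\<^sup>2" for k
    unfolding zs_def by (rule someI_ex[OF ex])
  have zs: "\<And>k. zs k \<in> S" "\<And>k. zs k \<in> cball zbar (e k)"
      "\<And>k. psi (zs k) < psi zbar + e k * (norm (zs k - zbar))\<^sup>2"
    using zsP by auto
  define ts where "ts k = norm (zs k - zbar)" for k
  define us where "us k = (1 / ts k) *\<^sub>R (zs k - zbar)" for k
  have tspos: "ts k > 0" for k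
  proof -
    have "zs k \<noteq> zbar" using zs(3)[of k] by auto
    then show ?thesis unfolding ts_def by simp
  qed
  have tsle: "ts k \<le> e k" for k using zs(2)[of k] unfolding ts_def by (simp add: dist_norm norm_minus_commute)
  have zsrep: "zs k = zbar + ts k *\<^sub>R us k" for k
    using tspos[of k] unfolding us_def by simp
  have "us k \<in> sphere 0 1" for k
    using tspos[of k] unfolding us_def ts_def by simp
  moreover have "seq_compact (sphere (0::'a) 1)"
    by (simp add: compact_imp_seq_compact)
  ultimately obtain l r where l: "l \<in> sphere 0 1" and r: "strict_mono r" and lim: "(us \<circ> r) \<longlonglongrightarrow> l"
    using seq_compactE[of "sphere 0 1" us] by blast
  define T where "T k = ts (r k)" for k
  define W where "W k = us (r k)" for k
  define E where "E k = e (r k)" for k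
  have E0: "E \<longlonglongrightarrow> 0"
    unfolding E_def e_def using LIMSEQ_subseq_LIMSEQ[OF LIMSEQ_inverse_real_of_nat r] by (simp add: o_def)
  have Tpos: "T k > 0" for k unfolding T_def using tspos by simp
  have TE: "T k \<le> E k" for k unfolding T_def E_def using tsle by simp
  have T0: "T \<longlonglongrightarrow> 0"
    by (rule tendsto_sandwich[of "\<lambda>_. 0" T sequentially E]) (auto simp: TE E0 less_imp_le[OF Tpos] intro!: always_eventually)
  have W: "W \<longlonglongrightarrow> l" using lim unfolding W_def by (simp add: o_def)
  have inS: "zbar + T k *\<^sub>R W k \<in> S" for k unfolding T_def W_def using zs(1)[of "r k"] zsrep[of "r k"] by simp
  have ineq: "psi (zbar + T k *\<^sub>R W k) - psi zbar < E k * (T k)\<^sup>2" for k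
    using zs(3)[of "r k"] zsrep[of "r k"] unfolding T_def W_def E_def ts_def by simp
  have lT: "l \<in> tangent_cone S zbar"
    unfolding tangent_cone_def using Tpos T0 W inS by blast
  have fl: "filterlim (\<lambda>k. (T k, W k)) (tw_filter l) sequentially"
    using seq_tw Tpos T0 W by blast
  have q: "((\<lambda>k. (psi (zbar + T k *\<^sub>R W k) - psi zbar) / T k) \<longlongrightarrow> D l) sequentially"
    using filterlim_compose[OF Dl fl] by simp
  have ET: "((\<lambda>k. E k * T k) \<longlongrightarrow> 0) sequentially"
    using tendsto_mult[OF E0 T0] by simp
  have "(psi (zbar + T k *\<^sub>R W k) - psi zbar) / T k \<le> E k * T k" for k
  proof -
    have "(psi (zbar + T k *\<^sub>R W k) - psi zbar) / T k \<le> E k * (T k)\<^sup>2 / T k"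
      using ineq[of k] Tpos[of k] by (simp add: divide_right_mono)
    also have "\<dots> = E k * T k" using Tpos[of k] by (simp add: power2_eq_square)
    finally show ?thesis .
  qed
  then have "D l \<le> 0" by (intro tendsto_le[OF _ ET q] trivial_limit_sequentially always_eventually allI)
  moreover have "D l \<ge> 0"
  proof -
    have "subderiv psi zbar l \<ge> 0" using H1 lT by (rule bspec)
    then show ?thesis using Dq[of l] by simp
  qed
  ultimately have Dl0: "subderiv psi zbar l = 0" using Dq by (simp add: zero_ereal_def)
  have l0: "l \<noteq> 0" using l by auto
  have pos: "second_subderiv psi zbar l
        + second_subderiv_indicator S zbar (\<lambda>v. - real_of_ereal (subderiv psi zbar v)) l > 0"
  proof -
    have "l \<in> tangent_cone S zbar - {0}" using lT l0 by simp
    with H2 have "subderiv psi zbar l = 0 \<longrightarrow> second_subderiv psi zbar l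
        + second_subderiv_indicator S zbar (\<lambda>v. - real_of_ereal (subderiv psi zbar v)) l > 0" by (rule bspec)
    then show ?thesis using Dl0 by (rule mp)
  qed
  define A where "A = {(t, w'). zbar + t *\<^sub>R w' \<in> S}"
  define F' where "F' = inf (tw_filter l) (principal A)"
  define G where "G = (\<lambda>(t, w'). ereal (2 * D w' / t))"
  have ss: "second_subderiv psi zbar l = ereal (L2 l)"
    unfolding second_subderiv_def by (rule lim_imp_Liminf) (use tw_ne L2 in auto)
  have ind: "second_subderiv_indicator S zbar (\<lambda>v. - real_of_ereal (subderiv psi zbar v)) l
      = Liminf F' G"
    unfolding second_subderiv_indicator_def F'_def A_def G_def using Dq by simp
  have flF: "filterlim (\<lambda>k. (T k, W k)) F' sequentially"
    unfolding F'_def filterlim_inf filterlim_principal A_def using fl inS by simp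
  define s where "s k = 2 * (psi (zbar + T k *\<^sub>R W k) - psi zbar) / (T k)\<^sup>2 - 2 * D (W k) / T k" for k
  have sq: "second_quot psi zbar (T k, W k) = ereal (s k)" for k
    unfolding s_def by (rule sq_eq[of psi zbar D, OF Dq])
  have sL: "s \<longlonglongrightarrow> L2 l"
    using filterlim_compose[OF L2 fl] unfolding sq by simp
  have "Liminf F' G \<le> Liminf (filtermap (\<lambda>k. (T k, W k)) sequentially) G"
    using flF unfolding filterlim_def by (rule Liminf_filter_anti)
  also have "\<dots> \<le> Liminf sequentially (\<lambda>k. G (T k, W k))"
    by (rule Liminf_filtermap_le)
  also have "\<dots> \<le> Liminf sequentially (\<lambda>k. ereal (2 * E k - s k))"
  proof (rule Liminf_mono, rule always_eventually, rule allI)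
    fix k
    have "2 * (psi (zbar + T k *\<^sub>R W k) - psi zbar) / (T k)\<^sup>2 \<le> 2 * E k"
      using ineq[of k] Tpos[of k] by (simp add: pos_divide_le_eq)
    then show "G (T k, W k) \<le> ereal (2 * E k - s k)"
      unfolding G_def s_def by simp
  qed
  also have "\<dots> = ereal (- L2 l)"
  proof -
    have "(\<lambda>k. 2 * E k - s k) \<longlonglongrightarrow> 2 * 0 - L2 l" by (intro tendsto_intros E0 sL)
    then have "(\<lambda>k. ereal (2 * E k - s k)) \<longlonglongrightarrow> ereal (- L2 l)" by simp
    then show ?thesis by (intro lim_imp_Liminf) auto
  qed
  finally have "Liminf F' G \<le> ereal (- L2 l)" by simp
  then have "ereal (L2 l) + Liminf F' G \<le> ereal (L2 l) + ereal (- L2 l)"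
    by (rule add_left_mono)
  then have "ereal (L2 l) + Liminf F' G \<le> 0" by (simp add: zero_ereal_def)
  then show False using pos unfolding ss ind by simp
qed

theorem mainTheorem2:
  fixes psi :: "'a::euclidean_space \<Rightarrow> real" and S :: "'a set" and zbar :: 'a
  assumes "S \<noteq> {}" and "closed S" and "zbar \<in> S"
    and "twice_semidifferentiable_at psi zbar"
  shows "(local_minimizer_on psi S zbar \<longrightarrow>
            (\<forall>w\<in>tangent_cone S zbar. subderiv psi zbar w \<ge> 0) \<and>
            (\<forall>w\<in>tangent_cone S zbar. subderiv psi zbar w = 0 \<longrightarrow>
               second_subderiv psi zbar w
               + second_subderiv_indicator S zbar (\<lambda>v. - real_of_ereal (subderiv psi zbar v)) w \<ge> 0))
       \<and> (((\<forall>w\<in>tangent_cone S zbar. subderiv psi zbar w \<ge> 0) \<and>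
            (\<forall>w\<in>tangent_cone S zbar - {0}. subderiv psi zbar w = 0 \<longrightarrow>
               second_subderiv psi zbar w
               + second_subderiv_indicator S zbar (\<lambda>v. - real_of_ereal (subderiv psi zbar v)) w > 0))
          \<longrightarrow> (\<exists>\<epsilon>>0. \<exists>\<eta>>0. \<forall>z\<in>S \<inter> cball zbar \<eta>. psi z \<ge> psi zbar + \<epsilon> * (norm (z - zbar))\<^sup>2)
              \<and> local_minimizer_on psi S zbar)"
proof -
  define D where "D v = real_of_ereal (subderiv psi zbar v)" for v
  have sd: "semidifferentiable_at psi zbar"
    using assms(4) unfolding twice_semidifferentiable_at_def by (rule conjunct1)
  have Dq: "\<And>v. subderiv psi zbar v = ereal (D v)"
    unfolding D_def using semi_lim(1)[OF sd] by blast
  have Dl: "\<And>w. ((\<lambda>(t, w'). (psi (zbar + t *\<^sub>R w') - psi zbar) / t) \<longlongrightarrow> D w) (tw_filter w)"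
    unfolding D_def using semi_lim(2)[OF sd] by blast
  have "\<forall>w. \<exists>L. (second_quot psi zbar \<longlongrightarrow> ereal L) (tw_filter w)"
    using assms(4) unfolding twice_semidifferentiable_at_def by (rule conjunct2)
  then have "\<exists>L2. \<forall>w. (second_quot psi zbar \<longlongrightarrow> ereal (L2 w)) (tw_filter w)"
    by (rule choice)
  then obtain L2 where L2: "\<And>w. (second_quot psi zbar \<longlongrightarrow> ereal (L2 w)) (tw_filter w)"
    by blast
  show ?thesis
  proof (rule conjI)
    show "local_minimizer_on psi S zbar \<longrightarrow> (\<forall>w\<in>tangent_cone S zbar. subderiv psi zbar w \<ge> 0) \<and>
            (\<forall>w\<in>tangent_cone S zbar. subderiv psi zbar w = 0 \<longrightarrow>
               second_subderiv psi zbar w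
               + second_subderiv_indicator S zbar (\<lambda>v. - real_of_ereal (subderiv psi zbar v)) w \<ge> 0)"
      by (rule impI, rule part1[OF Dq Dl L2])
  next
    show "((\<forall>w\<in>tangent_cone S zbar. subderiv psi zbar w \<ge> 0) \<and>
            (\<forall>w\<in>tangent_cone S zbar - {0}. subderiv psi zbar w = 0 \<longrightarrow>
               second_subderiv psi zbar w
               + second_subderiv_indicator S zbar (\<lambda>v. - real_of_ereal (subderiv psi zbar v)) w > 0))
          \<longrightarrow> (\<exists>\<epsilon>>0. \<exists>\<eta>>0. \<forall>z\<in>S \<inter> cball zbar \<eta>. psi z \<ge> psi zbar + \<epsilon> * (norm (z - zbar))\<^sup>2)
              \<and> local_minimizer_on psi S zbar"
    proof (intro impI conjI)
    assume h: "(\<forall>w\<in>tangent_cone S zbar. subderiv psi zbar w \<ge> 0) \<and>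
            (\<forall>w\<in>tangent_cone S zbar - {0}. subderiv psi zbar w = 0 \<longrightarrow>
               second_subderiv psi zbar w
               + second_subderiv_indicator S zbar (\<lambda>v. - real_of_ereal (subderiv psi zbar v)) w > 0)"
    have ex: "\<exists>\<epsilon>>0. \<exists>\<eta>>0. \<forall>z\<in>S \<inter> cball zbar \<eta>. psi z \<ge> psi zbar + \<epsilon> * (norm (z - zbar))\<^sup>2"
      by (rule part2[OF Dq Dl L2 conjunct1[OF h] conjunct2[OF h]])
    then show "\<exists>\<epsilon>>0. \<exists>\<eta>>0. \<forall>z\<in>S \<inter> cball zbar \<eta>. psi z \<ge> psi zbar + \<epsilon> * (norm (z - zbar))\<^sup>2" .
    from ex obtain \<epsilon> \<eta> where "\<epsilon> > 0" "\<eta> > 0"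
      and b: "\<forall>z\<in>S \<inter> cball zbar \<eta>. psi z \<ge> psi zbar + \<epsilon> * (norm (z - zbar))\<^sup>2" by blast
    have "\<forall>x\<in>S \<inter> cball zbar \<eta>. psi zbar \<le> psi x"
    proof
      fix x assume "x \<in> S \<inter> cball zbar \<eta>"
      then have "psi x \<ge> psi zbar + \<epsilon> * (norm (x - zbar))\<^sup>2" using b by blast
      moreover have "\<epsilon> * (norm (x - zbar))\<^sup>2 \<ge> 0" using \<open>\<epsilon> > 0\<close> by simp
      ultimately show "psi zbar \<le> psi x" by linarith
    qed
    then show "local_minimizer_on psi S zbar"
      unfolding local_minimizer_on_def using assms(3) \<open>\<eta> > 0\<close> by blast
  qed
  qed
qed

end
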